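(* Let $m\ge0$, $r>0$, $\gamma>0$ and $0<\alpha<\pi/2$. If $$r\le\sqrt{\frac{\pi(\pi-2\alpha)}{4\alpha^2 m\gamma}},$$ then for all $0\le\tau<\alpha mr$, all $d\ge0$ and all $\omega>0$, $$\mathrm{Re}\left(\Big(\pi+\frac{2j(\pi-\alpha)}{\alpha}\Big)\left(1+\frac{\gamma}{j\omega\big(mj\omega+d+\tfrac1re^{-j\omega\tau}\big)}\right)\right)>0.$$
   Context: $j$ denotes the imaginary unit. *)

theory Defs
  imports Complex_Main
begin

end

theory Submission
  imports Defs "HOL-Analysis.Analysis"
begin

lemma sin_lb: fixes e::real assumes "0 \<le> e" shows "e - e^3/6 \<le> sin e"
proof -
  have "\<bar>sin e - (\<Sum>m<3. sin_coeff m * e ^ m)\<bar> \<le> inverse (fact 3) * \<bar>e\<bar> ^ 3"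
    by (rule Maclaurin_sin_bound)
  moreover have "(\<Sum>m<3. sin_coeff m * e ^ m) = e"
    by (simp add: eval_nat_numeral sin_coeff_def)
  ultimately have "\<bar>sin e - e\<bar> \<le> e^3/6" using assms by (simp add: field_simps fact_numeral)
  thus ?thesis using abs_ge_minus_self[of "sin e - e"] by linarith
qed

lemma cos_lb: fixes x::real shows "1 - x^2/2 \<le> cos x"
proof -
  have "cos x = cos (2*(x/2))" by simp
  also have "\<dots> = 1 - 2 * sin (x/2) ^ 2" by (rule cos_double_sin)
  finally have e: "cos x = 1 - 2 * sin (x/2) ^ 2" .
  have "\<bar>sin (x/2)\<bar> \<le> \<bar>x/2\<bar>" by (rule abs_sin_x_le_abs_x)
  hence "sin (x/2) ^ 2 \<le> (x/2)^2"
    by (metis power2_abs power_mono abs_ge_zero)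
  thus ?thesis using e by (simp add: power_divide)
qed

lemma negcos_ub: fixes x::real assumes "pi/2 \<le> x" shows "- cos x \<le> x - pi/2"
proof -
  have "sin (x - pi/2) = - cos x" by (simp add: sin_diff)
  moreover have "sin (x - pi/2) \<le> x - pi/2" using sin_x_le_x assms by simp
  ultimately show ?thesis by simp
qed

lemma pi_sq_lt: "pi * pi < (987/100::real)"
proof -
  have "pi \<le> 3.1415926535899" using pi_approx by simp
  hence "pi * pi \<le> 3.1415926535899 * 3.1415926535899"
    by (intro mult_mono) auto
  thus ?thesis by simp
qed

lemma G_nonneg: fixes p v :: real assumes p0: "0 < p" and v0: "0 \<le> v" and h8: "8* v^2 < pi*p" and pp: "p < pi"
  shows "0 \<le> 4* v^3 - pi*p* v + (pi+p)*p*(1 - v^2/2)"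
proof -
  have "pi*p < pi*pi" using pp by simp
  hence v2: "v^2 < 5/4" using pi_sq_lt h8 by linarith
  define A where "A = 1 - v^2/2"
  define B where "B = pi*(1 - v - v^2/2)"
  have A0: "A > 0" using v2 by (simp add: A_def)
  have G: "4* v^3 - pi*p* v + (pi+p)*p*(1 - v^2/2) = A*p^2 + B*p + 4* v^3"
    by (simp add: A_def B_def algebra_simps power2_eq_square power3_eq_cube)
  show ?thesis
  proof (cases "B \<ge> 0")
    case True
    have "0 \<le> A*p^2" using A0 by simp
    moreover have "0 \<le> B*p" using True p0 by simp
    moreover have "0 \<le> v^3" using v0 by simp
    ultimately show ?thesis unfolding G by linarith
  next
    case False
    define t where "t = v + v^2/2 - 1"
    have "pi*(1 - v - v^2/2) < 0" using False by (simp add: B_def)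
    hence "1 - v - v^2/2 < 0" by (simp add: mult_less_0_iff)
    hence t0: "t > 0" by (simp add: t_def)
    have B2: "B^2 = pi*pi*t^2" by (simp add: B_def t_def power2_eq_square algebra_simps)
    have key: "B^2 \<le> 16*A* v^3"
    proof (cases "v \<le> 1")
      case True
      have "v^2 \<le> 1" using True v0 by (simp add: power_le_one)
      hence t1: "t \<le> 1/2" using True by (simp add: t_def)
      have "t^2 \<le> (1/2)^2" using t0 t1 by (intro power_mono) auto
      hence "pi*pi*t^2 \<le> (987/100) * (1/4)" using pi_sq_lt
        by (intro mult_mono) (auto simp: power2_eq_square)
      hence b: "B^2 \<le> 24675/10000" using B2 by simp
      have v73: "v \<ge> 73/100"
      proof (rule ccontr)
        assume "\<not> v \<ge> 73/100"
        hence "v < 73/100" by simp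
        hence "v^2 \<le> (73/100)^2" using v0 by (intro power_mono) auto
        moreover have "(73/100::real)^2 = 5329/10000" by (simp add: power2_eq_square)
        ultimately have "v^2 \<le> 5329/10000" by simp
        thus False using t0 \<open>v < 73/100\<close> unfolding t_def by linarith
      qed
      hence "(73/100)^3 \<le> v^3" by (intro power_mono) auto
      moreover have "A \<ge> 1/2" using \<open>v^2 \<le> 1\<close> by (simp add: A_def)
      ultimately have "16*(1/2)*(73/100)^3 \<le> 16*A* v^3"
        by (intro mult_mono) auto
      moreover have "(73/100::real)^3 = 389017/1000000" by (simp add: power3_eq_cube)
      ultimately show ?thesis using b by linarith
    next
      case False
      hence v1: "v > 1" by simp
      have v112: "v < 112/100"
      proof (rule ccontr)
        assume "\<not> v < 112/100"
        hence "(112/100)^2 \<le> v^2" by (intro power_mono) auto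
        thus False using v2 by (simp add: power2_eq_square)
      qed
      have t1: "t < 745/1000" using v112 v2 unfolding t_def by linarith
      have "t^2 \<le> (745/1000)^2" using t0 t1 by (intro power_mono) auto
      hence "pi*pi*t^2 \<le> (987/100) * (745/1000)^2" using pi_sq_lt
        by (intro mult_mono) (auto simp: power2_eq_square)
      hence b: "B^2 \<le> (987/100) * (745/1000)^2" using B2 by simp
      have "1 \<le> v^3" using v1 by simp
      moreover have "A \<ge> 3/8" using v2 by (simp add: A_def)
      ultimately have "16*(3/8)*1 \<le> 16*A* v^3"
        by (intro mult_mono) auto
      thus ?thesis using b by (simp add: power2_eq_square)
    qed
    have "4*A*(A*p^2 + B*p + 4* v^3) = (2*A*p+B)^2 + (16*A* v^3 - B^2)"
      by (simp add: algebra_simps power2_eq_square)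
    also have "\<dots> \<ge> 0" using key by simp
    finally have "0 \<le> 4*A*(A*p^2 + B*p + 4* v^3)" .
    hence "0 \<le> A*p^2 + B*p + 4* v^3" using A0
      by (simp add: zero_le_mult_iff)
    thus ?thesis unfolding G .
  qed
qed

lemma mainN:
  fixes \<alpha> u L \<phi> \<delta> :: real
  assumes a0: "0 < \<alpha>" and a1: "\<alpha> < pi/2" and upos: "0 < u"
    and hL: "4*\<alpha>^2 \<le> L*(pi*(pi-2*\<alpha>))" and f0: "0 \<le> \<phi>" and f1: "\<phi> < \<alpha>*u" and d0: "0 \<le> \<delta>"
  shows "0 < pi*u*L*((u - sin \<phi>)^2 + (cos \<phi> + \<delta>)^2) - pi*(u - sin \<phi>) + (2*(pi-\<alpha>)/\<alpha>)*(cos \<phi> + \<delta>)"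
proof -
  define u0 where "u0 = pi/(2*\<alpha>)"
  define K where "K = u0*(u0-1)"
  define b where "b = 2*(pi-\<alpha>)/\<alpha>"
  define s where "s = sin \<phi>"
  define c where "c = cos \<phi>"
  define Y where "Y = c + \<delta>"
  have u0gt1: "u0 > 1" using a0 a1 by (simp add: u0_def field_simps)
  have au0: "\<alpha>*u0 = pi/2" using a0 by (simp add: u0_def)
  have piu0: "pi/u0 = 2*\<alpha>" using a0 by (simp add: u0_def)
  have K_eq: "K = pi*(pi-2*\<alpha>)/(4*\<alpha>^2)" using a0
    by (simp add: K_def u0_def field_simps power2_eq_square)
  have K0: "K > 0" using u0gt1 by (simp add: K_def)
  have LK: "1 \<le> L*K" using hL a0 by (simp add: K_eq field_simps)
  have L0: "L > 0"
  proof (rule ccontr)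
    assume "\<not> L > 0"
    hence "L*K \<le> 0" using K0 by (simp add: mult_nonpos_nonneg)
    thus False using LK by simp
  qed
  have b0: "b > 0" using a0 a1 by (simp add: b_def)
  have ba: "b*\<alpha> = 2*pi - 2*\<alpha>" using a0 by (simp add: b_def)
  have s1: "s \<le> 1" by (simp add: s_def)
  have sc: "s^2 + c^2 = 1" by (simp add: s_def c_def)
  have N: "pi*u*L*((u - sin \<phi>)^2 + (cos \<phi> + \<delta>)^2) - pi*(u - sin \<phi>) + (2*(pi-\<alpha>)/\<alpha>)*(cos \<phi> + \<delta>)
      = pi*((u-s)*(u*L*(u-s) - 1)) + pi*u*L*Y^2 + b*Y"
    by (simp add: s_def c_def Y_def b_def algebra_simps power2_eq_square)
  show ?thesis unfolding N
  proof (cases "u0 < u")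
    case True
    have u1: "u - 1 > 0" using True u0gt1 by simp
    have us: "u - s \<ge> u - 1" using s1 by simp
    have "u*L*(u-s) \<ge> u*L*(u-1)" using us upos L0 by (intro mult_left_mono) auto
    moreover have "u*L*(u-1) - L*K = L*((u-u0)*(u+u0-1))" by (simp add: K_def algebra_simps)
    ultimately have q1: "u*L*(u-s) - 1 \<ge> L*((u-u0)*(u+u0-1))" using LK by linarith
    have q1pos: "L*((u-u0)*(u+u0-1)) > 0" using L0 True u0gt1 by simp
    have P: "(u-s)*(u*L*(u-s)-1) \<ge> (u-1)*(L*((u-u0)*(u+u0-1)))"
      using us q1 u1 q1pos by (intro mult_mono) auto
    have Ppos: "(u-1)*(L*((u-u0)*(u+u0-1))) > 0" using u1 q1pos by simp
    have LY: "0 \<le> pi*u*L*Y^2" using upos L0 by simp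
    show "0 < pi*((u-s)*(u*L*(u-s) - 1)) + pi*u*L*Y^2 + b*Y"
    proof (cases "Y \<ge> 0")
      case True
      have "0 < pi*((u-s)*(u*L*(u-s) - 1))" using P Ppos by simp
      moreover have "0 \<le> b*Y" using True b0 by simp
      ultimately show ?thesis using LY by linarith
    next
      case False
      hence cneg: "c < 0" using d0 by (simp add: Y_def)
      have fpi: "\<phi> > pi/2"
      proof (rule ccontr)
        assume "\<not> \<phi> > pi/2"
        hence "0 \<le> c" unfolding c_def using f0 by (intro cos_ge_zero) auto
        thus False using cneg by simp
      qed
      have "- c \<le> \<phi> - pi/2" unfolding c_def using fpi by (intro negcos_ub) simp
      also have "\<dots> < \<alpha>*u - \<alpha>*u0" using f1 au0 by simp
      finally have "- Y < \<alpha>*(u-u0)" using d0 by (simp add: Y_def algebra_simps)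
      hence "b*(-Y) < b*(\<alpha>*(u-u0))" using b0 by (rule mult_strict_left_mono)
      hence bY: "b*Y > - (b*\<alpha>*(u-u0))" by (simp add: algebra_simps)
      have "(u-1)*(u+u0-1) \<ge> (u0-1)*(2*u0-1)"
        using True u0gt1 by (intro mult_mono) auto
      hence "pi*L*((u-1)*(u+u0-1)) \<ge> pi*L*((u0-1)*(2*u0-1))"
        using L0 by (intro mult_left_mono) auto
      moreover have "pi*L*((u0-1)*(2*u0-1)) = pi*(L*K)*(2*u0-1)/u0"
        using u0gt1 by (simp add: K_def field_simps)
      moreover have "pi*(L*K)*(2*u0-1)/u0 \<ge> pi*1*(2*u0-1)/u0"
        using LK u0gt1 by (intro divide_right_mono mult_right_mono mult_left_mono) auto
      moreover have "pi*1*(2*u0-1)/u0 = 2*pi - 2*\<alpha>"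
        using u0gt1 piu0 by (simp add: field_simps)
      ultimately have "pi*L*((u-1)*(u+u0-1)) \<ge> b*\<alpha>" using ba by linarith
      hence "pi*L*((u-1)*(u+u0-1))*(u-u0) \<ge> (b*\<alpha>)*(u-u0)"
        using True by (intro mult_right_mono) auto
      moreover have "pi*((u-1)*(L*((u-u0)*(u+u0-1)))) = pi*L*((u-1)*(u+u0-1))*(u-u0)"
        by (simp add: algebra_simps)
      moreover have "pi*((u-s)*(u*L*(u-s) - 1)) \<ge> pi*((u-1)*(L*((u-u0)*(u+u0-1))))"
        using P by simp
      ultimately show ?thesis using bY LY by linarith
    qed
  next
    case False
    hence uu0: "u \<le> u0" by simp
    have "\<alpha>*u \<le> \<alpha>*u0" using uu0 a0 by simp
    hence fpi: "\<phi> < pi/2" using f1 au0 by simp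
    have c0: "c > 0" unfolding c_def using f0 fpi by (intro cos_gt_zero_pi) auto
    have s0: "s \<ge> 0" unfolding s_def using f0 fpi by (intro sin_ge_zero) auto
    have Yc: "Y \<ge> c" using d0 by (simp add: Y_def)
    have "Y^2 \<ge> c^2" using Yc c0 by (intro power_mono) auto
    hence "pi*u*L*Y^2 \<ge> pi*u*L*c^2" using upos L0 by (intro mult_left_mono) auto
    moreover have "b*Y \<ge> b*c" using Yc b0 by (intro mult_left_mono) auto
    ultimately have N1: "pi*((u-s)*(u*L*(u-s) - 1)) + pi*u*L*Y^2 + b*Y
        \<ge> pi*u*L*((u-s)^2 + c^2) - pi*(u-s) + b*c"
      by (simp add: algebra_simps power2_eq_square)
    have W: "(u-s)^2 + c^2 = u^2 - 2*u* s + 1" using sc by (simp add: power2_eq_square algebra_simps)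
    have "0 \<le> (u-s)^2 + c^2" by simp
    hence W0: "u^2 - 2*u* s + 1 \<ge> 0" using W by simp
    have "L \<ge> 1/K" using LK K0 by (simp add: field_simps)
    hence "pi*u*L*(u^2 - 2*u* s + 1) \<ge> pi*u*(1/K)*(u^2 - 2*u* s + 1)"
      using upos W0 by (intro mult_right_mono mult_left_mono) auto
    hence N2: "pi*((u-s)*(u*L*(u-s) - 1)) + pi*u*L*Y^2 + b*Y
        \<ge> pi*((u^3+u)/K - u + s*(1 - 2*u^2/K)) + b*c"
    proof -
      have e1: "pi*u*L*((u-s)^2 + c^2) = pi*u*L*(u^2 - 2*u* s + 1)" by (simp add: W)
      have e2: "pi*u*(1/K)*(u^2 - 2*u* s + 1) - pi*(u-s) = pi*((u^3+u)/K - u + s*(1 - 2*u^2/K))"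
        using K0 by (simp add: field_simps power2_eq_square power3_eq_cube)
      show ?thesis using N1 e1 e2 \<open>pi*u*L*(u^2 - 2*u* s + 1) \<ge> pi*u*(1/K)*(u^2 - 2*u* s + 1)\<close> by linarith
    qed
    have "0 < pi*((u^3+u)/K - u + s*(1 - 2*u^2/K)) + b*c"
    proof (cases "2*u^2 \<ge> K")
      case True
      have co: "1 - 2*u^2/K \<le> 0" using True K0 by (simp add: field_simps)
      have "s*(1 - 2*u^2/K) \<ge> 1*(1 - 2*u^2/K)" using s1 co by (intro mult_right_mono_neg) auto
      hence M1: "pi*((u^3+u)/K - u + s*(1 - 2*u^2/K)) \<ge> pi*((u^3+u)/K - u + (1 - 2*u^2/K))"
        by simp
      have M1e: "pi*((u^3+u)/K - u + (1 - 2*u^2/K)) = pi*(u-1)*(u^2-u-K)/K"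
        using K0 by (simp add: field_simps power2_eq_square power3_eq_cube)
      show ?thesis
      proof (cases "u \<le> 1")
        case True
        have "u^2 \<le> u" using True upos by (simp add: power2_eq_square mult_le_cancel_right1)
        hence "(u-1)*(u^2-u-K) \<ge> 0" using True K0 by (intro mult_nonpos_nonpos) auto
        hence "pi*((u-1)*(u^2-u-K)) \<ge> 0" by simp
        hence "pi*(u-1)*(u^2-u-K)/K \<ge> 0" using K0 by (simp add: mult.assoc)
        moreover have "b*c > 0" using b0 c0 by simp
        ultimately show ?thesis using M1 M1e by linarith
      next
        case False
        hence u1: "u > 1" by simp
        define w where "w = u0 - u"
        define e where "e = \<alpha>*w"
        have w0: "w \<ge> 0" using uu0 by (simp add: w_def)
        have wle: "w \<le> u0 - 1" using u1 by (simp add: w_def)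
        have e0: "e \<ge> 0" using w0 a0 by (simp add: e_def)
        have ee: "e = pi/2 - \<alpha>*u" using au0 by (simp add: e_def w_def algebra_simps)
        have "cos (\<alpha>*u) < c" unfolding c_def using f0 f1 \<open>\<alpha>*u \<le> \<alpha>*u0\<close> au0
          by (subst cos_mono_less_eq) auto
        moreover have "cos (\<alpha>*u) = sin e" by (simp add: ee sin_diff)
        ultimately have ce: "c > e - e^3/6" using sin_lb[OF e0] by simp
        hence bce: "b*c > b*(e - e^3/6)" using b0 by simp
        have bee: "b*(e - e^3/6) = (2*pi - 2*\<alpha>)*w*(1 - \<alpha>^2*w^2/6)"
        proof -
          have "b*(e - e^3/6) = (b*\<alpha>)*w*(1 - \<alpha>^2*w^2/6)"
            by (simp add: e_def algebra_simps power2_eq_square power3_eq_cube)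
          thus ?thesis using ba by simp
        qed
        have twopi: "2*pi - 2*\<alpha> = pi*(2*u0-1)/u0" using piu0 u0gt1 by (simp add: field_simps)
        have aa: "\<alpha>^2*u0^2 = pi^2/4"
        proof -
          have "\<alpha>^2*u0^2 = (\<alpha>*u0)^2" by (simp add: power_mult_distrib)
          also have "\<dots> = (pi/2)^2" by (simp only: au0)
          finally show ?thesis by (simp add: power_divide)
        qed
        have pi2: "pi^2 < 10" using pi_sq_lt by (simp add: power2_eq_square)
        have "\<alpha>^2*((2*u0-1)*(u0-1)) \<le> \<alpha>^2*(2*u0^2)"
          using u0gt1 by (intro mult_left_mono) (auto simp: algebra_simps power2_eq_square)
        hence A5: "\<alpha>^2*((2*u0-1)*(u0-1)) \<le> 5" using aa pi2 by simp
        have "(\<alpha>^2*((2*u0-1)*(u0-1)))*w^2 \<le> 5*w^2" using A5 by (intro mult_right_mono) auto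
        moreover have "w^2 \<le> w*(u0-1)" using w0 wle by (simp add: power2_eq_square mult_left_mono)
        ultimately have key: "(u-1)*(u+u0-1) \<le> (2*u0-1)*(u0-1)*(1 - \<alpha>^2*w^2/6)"
        proof -
          have L1: "(u-1)*(u+u0-1) = (2*u0-1)*(u0-1) - w*(3*u0-2) + w^2"
            by (simp add: w_def algebra_simps power2_eq_square)
          have R1: "(2*u0-1)*(u0-1)*(1 - \<alpha>^2*w^2/6) = (2*u0-1)*(u0-1) - (\<alpha>^2*((2*u0-1)*(u0-1)))*w^2/6"
            by (simp add: algebra_simps)
          have "w*(3*u0-2) \<ge> w*(11*(u0-1)/6)" using w0 u0gt1 by (intro mult_left_mono) auto
          moreover have "w*(11*(u0-1)/6) = 11/6*(w*(u0-1))" by simp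
          ultimately show ?thesis using L1 R1 \<open>(\<alpha>^2*((2*u0-1)*(u0-1)))*w^2 \<le> 5*w^2\<close> \<open>w^2 \<le> w*(u0-1)\<close>
            by linarith
        qed
        have ueq: "u^2-u-K = -(w*(u+u0-1))" by (simp add: w_def K_def algebra_simps power2_eq_square)
        have h1: "pi*(u-1)*(u^2-u-K)/K = pi*(u-1)*(-(w*(u+u0-1)))/K" by (simp only: ueq)
        have h2: "pi*(u-1)*(-(w*(u+u0-1)))/K = -(pi*w/u0)*((u-1)*(u+u0-1)/(u0-1))"
          using u0gt1 unfolding K_def by (simp add: field_simps)
        have "pi*(u-1)*(u^2-u-K)/K = -(pi*w/u0)*((u-1)*(u+u0-1)/(u0-1))" using h1 h2 by simp
        moreover have "(pi*w/u0)*((u-1)*(u+u0-1)/(u0-1)) \<le> (pi*w/u0)*((2*u0-1)*(1 - \<alpha>^2*w^2/6))"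
        proof (rule mult_left_mono)
          show "(u-1)*(u+u0-1)/(u0-1) \<le> (2*u0-1)*(1 - \<alpha>^2*w^2/6)"
          proof -
            have "(u-1)*(u+u0-1) \<le> ((2*u0-1)*(1 - \<alpha>^2*w^2/6))*(u0-1)"
              using key by (simp add: algebra_simps)
            thus ?thesis using u0gt1 by (subst pos_divide_le_eq) auto
          qed
          show "0 \<le> pi*w/u0" using w0 u0gt1 by simp
        qed
        moreover have "(pi*w/u0)*((2*u0-1)*(1 - \<alpha>^2*w^2/6)) = b*(e - e^3/6)"
        proof -
          define q where "q = pi/u0"
          have tq: "2*pi - 2*\<alpha> = q*(2*u0-1)" using twopi by (simp add: q_def)
          have "pi*w/u0 = q*w" by (simp add: q_def)
          hence "(pi*w/u0)*((2*u0-1)*(1 - \<alpha>^2*w^2/6)) = (q*(2*u0-1))*w*(1 - \<alpha>^2*w^2/6)"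
            by (simp add: algebra_simps)
          also have "\<dots> = (2*pi - 2*\<alpha>)*w*(1 - \<alpha>^2*w^2/6)" by (simp only: tq)
          finally show ?thesis using bee by simp
        qed
        ultimately have "pi*(u-1)*(u^2-u-K)/K + b*(e - e^3/6) \<ge> 0" by linarith
        thus ?thesis using M1 M1e bce by linarith
      qed
    next
      case False
      have co: "1 - 2*u^2/K > 0" using False K0 by (simp add: field_simps)
      have "s*(1 - 2*u^2/K) \<ge> 0" using s0 co by simp
      moreover have "u/K > 0" using upos K0 by simp
      moreover have "(u^3+u)/K = u^3/K + u/K" by (simp add: add_divide_distrib)
      ultimately have "(u^3+u)/K - u + s*(1 - 2*u^2/K) > u^3/K - u" by linarith
      hence M1: "pi*((u^3+u)/K - u + s*(1 - 2*u^2/K)) > pi*(u^3/K - u)"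
        by (intro mult_strict_left_mono) auto
      have "\<phi>^2 \<le> (\<alpha>*u)^2" using f0 f1 by (intro power_mono) auto
      hence "c \<ge> 1 - (\<alpha>*u)^2/2" using cos_lb[of \<phi>] by (simp add: c_def)
      hence M2: "b*c \<ge> b*(1 - (\<alpha>*u)^2/2)" using b0 by (intro mult_left_mono) auto
      define p where "p = pi - 2*\<alpha>"
      define v where "v = \<alpha>*u"
      have p0: "p > 0" using a1 by (simp add: p_def)
      have ppi: "p < pi" using a0 by (simp add: p_def)
      have v0: "v \<ge> 0" using a0 upos by (simp add: v_def)
      have Kp: "K = pi*p/(4*\<alpha>^2)" using K_eq by (simp add: p_def)
      have "2*u^2 < pi*p/(4*\<alpha>^2)" using False Kp by simp
      hence "8*(\<alpha>^2*u^2) < pi*p" using a0 by (simp add: field_simps)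
      hence h8: "8 * v^2 < pi*p" by (simp add: v_def power_mult_distrib)
      have G: "0 \<le> 4 * v^3 - pi*p * v + (pi+p)*p*(1 - v^2/2)" by (rule G_nonneg[OF p0 v0 h8 ppi])
      have "pi*(u^3/K - u) + b*(1 - (\<alpha>*u)^2/2) = (4 * v^3 - pi*p * v + (pi+p)*p*(1 - v^2/2))/(\<alpha>*p)"
        using a0 p0 by (simp add: Kp b_def v_def p_def field_simps power2_eq_square power3_eq_cube)
      moreover have "(4 * v^3 - pi*p * v + (pi+p)*p*(1 - v^2/2))/(\<alpha>*p) \<ge> 0"
        using G a0 p0 by simp
      ultimately show ?thesis using M1 M2 by linarith
    qed
    then show "0 < pi*((u-s)*(u*L*(u-s) - 1)) + pi*u*L*Y^2 + b*Y" using N2 by linarith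
  qed
qed

theorem mainTheorem12:
  fixes m r \<gamma> \<alpha> :: real
  assumes "m \<ge> 0" and "r > 0" and "\<gamma> > 0"
    and "0 < \<alpha>" and "\<alpha> < pi / 2"
    and "r \<le> sqrt (pi * (pi - 2 * \<alpha>) / (4 * \<alpha>^2 * m * \<gamma>))"
  shows "\<forall>\<tau> d \<omega> :: real. 0 \<le> \<tau> \<and> \<tau> < \<alpha> * m * r \<and> d \<ge> 0 \<and> \<omega> > 0 \<longrightarrow>
    Re ((complex_of_real pi + 2 * \<i> * complex_of_real ((pi - \<alpha>) / \<alpha>)) *
        (1 + complex_of_real \<gamma> /
           (\<i> * complex_of_real \<omega> *
             (complex_of_real m * \<i> * complex_of_real \<omega> + complex_of_real d
              + complex_of_real (1 / r) * exp (- \<i> * complex_of_real (\<omega> * \<tau>)))))) > 0"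
proof (intro allI impI)
  fix \<tau> d \<omega> :: real
  assume H: "0 \<le> \<tau> \<and> \<tau> < \<alpha> * m * r \<and> d \<ge> 0 \<and> \<omega> > 0"
  hence t0: "0 \<le> \<tau>" and t1: "\<tau> < \<alpha> * m * r" and d0: "d \<ge> 0" and w0: "\<omega> > 0" by auto
  have r0: "r > 0" and g0: "\<gamma> > 0" and a0: "0 < \<alpha>" and a1: "\<alpha> < pi/2" using assms by auto
  define Q where "Q = pi * (pi - 2 * \<alpha>) / (4 * \<alpha>^2 * m * \<gamma>)"
  have rQ: "r \<le> sqrt Q" using assms(6) by (simp add: Q_def)
  have m0: "m > 0"
  proof (rule ccontr)
    assume "\<not> m > 0"
    hence "m = 0" using assms(1) by simp
    hence "Q = 0" by (simp add: Q_def)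
    thus False using rQ r0 by simp
  qed
  have "0 < sqrt Q" using rQ r0 by linarith
  hence Q0: "0 < Q" by simp
  have "r^2 \<le> (sqrt Q)^2" using rQ r0 by (intro power_mono) auto
  hence "r^2 \<le> Q" using Q0 by simp
  hence hyp: "4*\<alpha>^2*m*\<gamma>*r^2 \<le> pi*(pi-2*\<alpha>)"
    using m0 g0 a0 by (simp add: Q_def field_simps)
  define b where "b = 2*(pi-\<alpha>)/\<alpha>"
  define s where "s = sin (\<omega>*\<tau>)"
  define c where "c = cos (\<omega>*\<tau>)"
  define z where "z = \<i> * complex_of_real \<omega> *
             (complex_of_real m * \<i> * complex_of_real \<omega> + complex_of_real d
              + complex_of_real (1 / r) * exp (- \<i> * complex_of_real (\<omega> * \<tau>)))"
  have ex: "exp (- \<i> * complex_of_real (\<omega> * \<tau>)) = cis (-(\<omega>*\<tau>))"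
    by (simp add: cis_conv_exp)
  have Rez: "Re z = -m*\<omega>^2 + (\<omega>/r)* s"
    unfolding z_def ex by (simp add: s_def power2_eq_square field_simps)
  have Imz: "Im z = \<omega>*d + (\<omega>/r)*c"
    unfolding z_def ex by (simp add: c_def field_simps)
  define E where "E = pi*((Re z)^2 + (Im z)^2) + \<gamma>*(pi*Re z + b*Im z)"
  define u where "u = m*r*\<omega>"
  define L where "L = 1/(m*r^2*\<gamma>)"
  have N: "0 < pi*u*L*((u - sin (\<omega>*\<tau>))^2 + (cos (\<omega>*\<tau>) + d*r)^2) - pi*(u - sin (\<omega>*\<tau>)) + (2*(pi-\<alpha>)/\<alpha>)*(cos (\<omega>*\<tau>) + d*r)"
  proof (rule mainN[OF a0 a1])
    show "0 < u" using m0 r0 w0 by (simp add: u_def)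
    have "L*(pi*(pi-2*\<alpha>)) \<ge> L*(4*\<alpha>^2*m*\<gamma>*r^2)"
      using hyp m0 r0 g0 by (intro mult_left_mono) (auto simp: L_def)
    moreover have "L*(4*\<alpha>^2*m*\<gamma>*r^2) = 4*\<alpha>^2" using m0 r0 g0 by (simp add: L_def field_simps)
    ultimately show "4*\<alpha>^2 \<le> L*(pi*(pi-2*\<alpha>))" by simp
    show "0 \<le> \<omega>*\<tau>" using w0 t0 by simp
    have "\<omega>*\<tau> < \<omega>*(\<alpha>*m*r)" using w0 t1 by simp
    thus "\<omega>*\<tau> < \<alpha>*u" by (simp add: u_def algebra_simps)
    show "0 \<le> d*r" using d0 r0 by simp
  qed
  have EN: "E = \<gamma>*(\<omega>/r)*(pi*u*L*((u - sin (\<omega>*\<tau>))^2 + (cos (\<omega>*\<tau>) + d*r)^2) - pi*(u - sin (\<omega>*\<tau>)) + (2*(pi-\<alpha>)/\<alpha>)*(cos (\<omega>*\<tau>) + d*r))"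
  proof -
    define k where "k = \<omega>/r"
    define W where "W = (u - s)^2 + (c + d*r)^2"
    define Y where "Y = c + d*r"
    have hx: "Re z = -(k*(u - s))" unfolding Rez using r0 by (simp add: k_def u_def field_simps power2_eq_square)
    have hy: "Im z = k*Y" unfolding Imz using r0 by (simp add: k_def Y_def field_simps)
    have hk: "\<gamma>*k*(u*L) = k^2" using m0 r0 g0 by (simp add: k_def u_def L_def field_simps power2_eq_square)
    have "(Re z)^2 + (Im z)^2 = k^2 * W" unfolding hx hy W_def Y_def by (simp add: power2_eq_square algebra_simps)
    hence "E = pi*(k^2*W) + \<gamma>*(pi*(-(k*(u-s))) + b*(k*Y))" unfolding E_def hx hy by simp
    moreover have "\<gamma>*k*(pi*u*L*W - pi*(u-s) + b*Y) = pi*(\<gamma>*k*(u*L))*W + \<gamma>*(pi*(-(k*(u-s))) + b*(k*Y))"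
      by (simp add: algebra_simps)
    ultimately have "E = \<gamma>*k*(pi*u*L*W - pi*(u-s) + b*Y)" using hk by simp
    thus ?thesis by (simp add: k_def W_def Y_def b_def s_def c_def)
  qed
  have E0: "E > 0" unfolding EN using N g0 w0 r0 by simp
  show "Re ((complex_of_real pi + 2 * \<i> * complex_of_real ((pi - \<alpha>) / \<alpha>)) * (1 + complex_of_real \<gamma> / z)) > 0"
  proof (cases "z = 0")
    case True
    thus ?thesis by simp
  next
    case False
    hence nz: "(Re z)^2 + (Im z)^2 > 0"
      by (metis complex_eq_0 add_pos_nonneg not_le zero_le_power2 power2_less_eq_zero_iff add_nonneg_nonneg order_le_less)
    have "Re ((complex_of_real pi + 2 * \<i> * complex_of_real ((pi - \<alpha>) / \<alpha>)) * (1 + complex_of_real \<gamma> / z))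
        = pi + (pi*\<gamma>*Re z + b*\<gamma>*Im z)/((Re z)^2 + (Im z)^2)"
    proof -
      define a where "a = complex_of_real pi + 2 * \<i> * complex_of_real ((pi - \<alpha>) / \<alpha>)"
      have Ra: "Re (a * complex_of_real \<gamma>) = pi*\<gamma>" by (simp add: a_def)
      have Ia: "Im (a * complex_of_real \<gamma>) = b*\<gamma>" by (simp add: a_def b_def)
      have "a * (1 + complex_of_real \<gamma> / z) = a + (a * complex_of_real \<gamma>) / z"
        by (simp add: distrib_left)
      hence "Re (a * (1 + complex_of_real \<gamma> / z)) = Re a + Re ((a * complex_of_real \<gamma>) / z)" by simp
      also have "Re a = pi" by (simp add: a_def)
      also have "Re ((a * complex_of_real \<gamma>) / z) = (pi*\<gamma>*Re z + b*\<gamma>*Im z)/((Re z)^2 + (Im z)^2)"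
        unfolding Re_divide Ra Ia ..
      finally show ?thesis by (simp add: a_def)
    qed
    also have "\<dots> = E/((Re z)^2 + (Im z)^2)"
    proof -
      have nz': "(Re z)^2 + (Im z)^2 \<noteq> 0" using nz by (metis less_irrefl)
      show ?thesis unfolding E_def using nz' by (simp add: add_divide_eq_iff algebra_simps)
    qed
    finally show ?thesis using E0 nz by simp
  qed
qed

end
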